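(* Let $p>0$ and let $(u_n)_{n\ge0}$ be a sequence in $E^1$ which is $E_p$ summable to $\mu\in E^1$. If $\sqrt{n}\,D(u_{n-1},u_n)=O(1)$ as $n\to\infty$, then $(u_n)$ is bounded, i.e. there is $M>0$ with $D(u_n,\overline{0})<M$ for all $n$.
   Context: $E^1$ denotes the set of fuzzy numbers: functions $u:\mathbb{R}\to[0,1]$ that are normal, fuzzy convex, upper semicontinuous, and have compact support $\overline{\{t:u(t)>0\}}$. For $\alpha\in(0,1]$ the $\alpha$-level set is $[u]_\alpha=\{t:u(t)\ge\alpha\}$ and $[u]_0=\overline{\{t:u(t)>0\}}$; each is a compact interval $[u^-_\alpha,u^+_\alpha]$. Addition and scalar multiplication are defined levelwise: $[u+v]_\alpha=[u^-_\alpha+v^-_\alpha,u^+_\alpha+v^+_\alpha]$ and $[ku]_\alpha=k[u]_\alpha$ for $k\in\mathbb{R}$. The metric is $D(u,v)=\sup_{\alpha\in[0,1]}\max\{|u^-_\alpha-v^-_\alpha|,|u^+_\alpha-v^+_\alpha|\}$. $\overline{0}$ is the fuzzy number equal to $1$ at $0$ and $0$ elsewhere. For $p>0$ the Euler means are $t^{p}_n=\frac{1}{(p+1)^n}\sum_{k=0}^n\binom{n}{k}p^{n-k}u_k$, and $(u_n)$ is $E_p$ summable to $\mu$ if $D(t^p_n,\mu)\to0$. *)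

theory Defs
  imports "HOL-Analysis.Analysis" "HOL-Library.Landau_Symbols"
begin

type_synonym fuzzy = "real \<Rightarrow> real"

definition usc :: "fuzzy \<Rightarrow> bool" where
  "usc u \<longleftrightarrow> (\<forall>x e. e > 0 \<longrightarrow> eventually (\<lambda>y. u y < u x + e) (at x))"

definition fuzzy_number :: "fuzzy \<Rightarrow> bool" where
  "fuzzy_number u \<longleftrightarrow>
     (\<forall>t. 0 \<le> u t \<and> u t \<le> 1)
   \<and> (\<exists>t. u t = 1)
   \<and> (\<forall>x y l. 0 \<le> l \<and> l \<le> 1 \<longrightarrow> min (u x) (u y) \<le> u (l * x + (1 - l) * y))
   \<and> usc u
   \<and> compact (closure {t. u t > 0})"

definition levelset :: "fuzzy \<Rightarrow> real \<Rightarrow> real set" where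
  "levelset u \<alpha> = (if \<alpha> = 0 then closure {t. u t > 0} else {t. \<alpha> \<le> u t})"

definition lo :: "fuzzy \<Rightarrow> real \<Rightarrow> real" where
  "lo u \<alpha> = Inf (levelset u \<alpha>)"

definition hi :: "fuzzy \<Rightarrow> real \<Rightarrow> real" where
  "hi u \<alpha> = Sup (levelset u \<alpha>)"

text \<open>The fuzzy number whose alpha-level sets (alpha in (0,1]) are [L alpha, H alpha].\<close>
definition from_levels :: "(real \<Rightarrow> real) \<Rightarrow> (real \<Rightarrow> real) \<Rightarrow> fuzzy" where
  "from_levels L H = (\<lambda>t. Sup ({0} \<union> {\<alpha>. 0 < \<alpha> \<and> \<alpha> \<le> 1 \<and> L \<alpha> \<le> t \<and> t \<le> H \<alpha>}))"

definition fadd :: "fuzzy \<Rightarrow> fuzzy \<Rightarrow> fuzzy" where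
  "fadd u v = from_levels (\<lambda>\<alpha>. lo u \<alpha> + lo v \<alpha>) (\<lambda>\<alpha>. hi u \<alpha> + hi v \<alpha>)"

definition fscale :: "real \<Rightarrow> fuzzy \<Rightarrow> fuzzy" where
  "fscale k u = from_levels (\<lambda>\<alpha>. min (k * lo u \<alpha>) (k * hi u \<alpha>))
                            (\<lambda>\<alpha>. max (k * lo u \<alpha>) (k * hi u \<alpha>))"

definition fzero :: fuzzy where
  "fzero = (\<lambda>t. if t = 0 then 1 else 0)"

definition fdist :: "fuzzy \<Rightarrow> fuzzy \<Rightarrow> real" where
  "fdist u v = (SUP \<alpha>\<in>{0..1}. max \<bar>lo u \<alpha> - lo v \<alpha>\<bar> \<bar>hi u \<alpha> - hi v \<alpha>\<bar>)"

fun fsum_upto :: "(nat \<Rightarrow> fuzzy) \<Rightarrow> nat \<Rightarrow> fuzzy" where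
  "fsum_upto f 0 = f 0"
| "fsum_upto f (Suc n) = fadd (fsum_upto f n) (f (Suc n))"

definition euler_mean :: "real \<Rightarrow> (nat \<Rightarrow> fuzzy) \<Rightarrow> nat \<Rightarrow> fuzzy" where
  "euler_mean p u n = fscale (1 / (p + 1) ^ n)
     (fsum_upto (\<lambda>k. fscale (real (n choose k) * p ^ (n - k)) (u k)) n)"

definition Ep_summable_to :: "real \<Rightarrow> (nat \<Rightarrow> fuzzy) \<Rightarrow> fuzzy \<Rightarrow> bool" where
  "Ep_summable_to p u \<mu> \<longleftrightarrow> (\<lambda>n. fdist (euler_mean p u n) \<mu>) \<longlonglongrightarrow> 0"

end

theory Submission
  imports Defs "HOL-Analysis.Analysis"
begin


lemma mom0: "(\<Sum>k\<le>n. real (n choose k) * p ^ (n - k)) = (p + 1) ^ n"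
  using binomial_ring[of 1 p n] by (simp add: add.commute)

lemma mom1: "(p + 1) * (\<Sum>k\<le>n. real k * (real (n choose k) * p ^ (n - k))) = real n * (p + 1) ^ n"
proof (cases n)
  case 0 then show ?thesis by simp
next
  case (Suc m)
  have "(\<Sum>k\<le>Suc m. real k * (real (Suc m choose k) * p ^ (Suc m - k)))
      = (\<Sum>j\<le>m. real (Suc j) * (real (Suc m choose Suc j) * p ^ (m - j)))"
    by (subst sum.atMost_Suc_shift) simp
  also have "\<dots> = (\<Sum>j\<le>m. real (Suc m) * (real (m choose j) * p ^ (m - j)))"
  proof (rule sum.cong[OF refl])
    fix j assume "j \<in> {..m}"
    have "real (Suc j) * real (Suc m choose Suc j) = real (Suc m) * real (m choose j)"
      using binomial_absorption[of j "Suc m"] by (metis of_nat_mult diff_Suc_1)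
    then show "real (Suc j) * (real (Suc m choose Suc j) * p ^ (m - j)) = real (Suc m) * (real (m choose j) * p ^ (m - j))"
      by (metis mult.assoc)
  qed
  also have "\<dots> = real (Suc m) * (p+1)^m" by (simp add: sum_distrib_left[symmetric] mom0)
  finally show ?thesis using Suc by simp
qed

lemma mom2: "(p + 1)^2 * (\<Sum>k\<le>n. (real k)^2 * (real (n choose k) * p ^ (n - k)))
   = (real n * (real n - 1) + real n * (p + 1)) * (p + 1) ^ n"
proof (cases n)
  case 0 then show ?thesis by simp
next
  case (Suc m)
  have "(\<Sum>k\<le>Suc m. (real k)^2 * (real (Suc m choose k) * p ^ (Suc m - k)))
      = (\<Sum>j\<le>m. (real (Suc j))^2 * (real (Suc m choose Suc j) * p ^ (m - j)))"
    by (subst sum.atMost_Suc_shift) simp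
  also have "\<dots> = (\<Sum>j\<le>m. real (Suc m) * ((real j + 1) * (real (m choose j) * p ^ (m - j))))"
  proof (rule sum.cong[OF refl])
    fix j assume "j \<in> {..m}"
    have "real (Suc j) * real (Suc m choose Suc j) = real (Suc m) * real (m choose j)"
      using binomial_absorption[of j "Suc m"] by (metis of_nat_mult diff_Suc_1)
    note e0 = this
    have "(real (Suc j))^2 * (real (Suc m choose Suc j) * p ^ (m - j)) = real (Suc j) * (real (Suc j) * real (Suc m choose Suc j)) * p ^ (m - j)"
      by (simp add: power2_eq_square mult_ac)
    also have "\<dots> = real (Suc j) * (real (Suc m) * real (m choose j)) * p ^ (m - j)" using e0 by simp
    finally show "(real (Suc j))^2 * (real (Suc m choose Suc j) * p ^ (m - j)) = real (Suc m) * ((real j + 1) * (real (m choose j) * p ^ (m - j)))"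
      by (simp add: algebra_simps)
  qed
  also have "\<dots> = real (Suc m) * ((\<Sum>j\<le>m. real j * (real (m choose j) * p ^ (m - j))) + (p+1)^m)"
    by (simp add: sum_distrib_left[symmetric] distrib_right sum.distrib mom0)
  finally have e: "(\<Sum>k\<le>Suc m. (real k)^2 * (real (Suc m choose k) * p ^ (Suc m - k))) =
     real (Suc m) * ((\<Sum>j\<le>m. real j * (real (m choose j) * p ^ (m - j))) + (p+1)^m)" .
  have m1: "(p + 1) * (\<Sum>j\<le>m. real j * (real (m choose j) * p ^ (m - j))) = real m * (p + 1) ^ m"
    by (rule mom1)
  have "(p + 1)^2 * (real (Suc m) * ((\<Sum>j\<le>m. real j * (real (m choose j) * p ^ (m - j))) + (p+1)^m))
     = real (Suc m) * (p+1) * ((p + 1) * (\<Sum>j\<le>m. real j * (real (m choose j) * p ^ (m - j))) + (p+1)*(p+1)^m)"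
    by (simp add: power2_eq_square algebra_simps)
  also have "\<dots> = real (Suc m) * (p+1) * (real m * (p+1)^m + (p+1)*(p+1)^m)" using m1 by simp
  also have "\<dots> = real (Suc m) * (real m + (p+1)) * (p+1)^(Suc m)" by (simp add: algebra_simps)
  finally show ?thesis unfolding Suc e by (simp add: algebra_simps)
qed



lemma sqrt_step: "1 / sqrt (real (Suc k)) \<le> 2 * (sqrt (real (Suc k)) - sqrt (real k))"
proof -
  have a: "sqrt (real k) \<le> sqrt (real (Suc k))" by simp
  have p: "sqrt (real (Suc k)) > 0" by simp
  have "(sqrt (real (Suc k)) - sqrt (real k)) * (sqrt (real (Suc k)) + sqrt (real k)) = 1"
    by (simp add: algebra_simps)
  hence "1 = (sqrt (real (Suc k)) - sqrt (real k)) * (sqrt (real (Suc k)) + sqrt (real k))" by simp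
  also have "\<dots> \<le> (sqrt (real (Suc k)) - sqrt (real k)) * (2 * sqrt (real (Suc k)))"
    by (rule mult_left_mono) (use a in auto)
  finally have f: "1 \<le> (2 * (sqrt (real (Suc k)) - sqrt (real k))) * sqrt (real (Suc k))" by (simp add: algebra_simps)
  show ?thesis using p f by (simp add: pos_divide_le_eq)
qed

lemma diff_sqrt_bound:
  fixes a :: "nat \<Rightarrow> real"
  assumes C: "C \<ge> 0" and d: "\<And>k. k \<ge> 1 \<Longrightarrow> \<bar>a k - a (k-1)\<bar> \<le> C / sqrt (real k)"
  shows "\<bar>a k - a m\<bar> \<le> 2 * C * \<bar>sqrt (real k) - sqrt (real m)\<bar>"
proof -
  have st: "\<bar>a (Suc j) - a j\<bar> \<le> 2 * C * (sqrt (real (Suc j)) - sqrt (real j))" for j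
  proof -
    have "\<bar>a (Suc j) - a j\<bar> \<le> C / sqrt (real (Suc j))" using d[of "Suc j"] by simp
    also have "\<dots> = C * (1 / sqrt (real (Suc j)))" by simp
    also have "\<dots> \<le> C * (2 * (sqrt (real (Suc j)) - sqrt (real j)))"
      by (rule mult_left_mono[OF sqrt_step C])
    also have "\<dots> = 2 * C * (sqrt (real (Suc j)) - sqrt (real j))" by (simp add: algebra_simps)
    finally show ?thesis .
  qed
  have inc: "incseq (\<lambda>j. a j + 2 * C * sqrt (real j))"
    by (rule incseq_SucI) (use st[unfolded abs_le_iff] in \<open>auto simp: algebra_simps\<close>)
  have dec: "decseq (\<lambda>j. a j - 2 * C * sqrt (real j))"
    by (rule decseq_SucI) (use st[unfolded abs_le_iff] in \<open>auto simp: algebra_simps\<close>)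
  have gen: "\<bar>a k - a m\<bar> \<le> 2 * C * \<bar>sqrt (real k) - sqrt (real m)\<bar>" if "m \<le> k" for k m
  proof -
    have "sqrt (real m) \<le> sqrt (real k)" using that by simp
    moreover have "a m + 2 * C * sqrt (real m) \<le> a k + 2 * C * sqrt (real k)" using incseqD[OF inc that] .
    moreover have "a k - 2 * C * sqrt (real k) \<le> a m - 2 * C * sqrt (real m)" using decseqD[OF dec that] .
    ultimately show ?thesis by (simp add: abs_le_iff algebra_simps)
  qed
  show ?thesis
  proof (cases "m \<le> k")
    case True then show ?thesis by (rule gen)
  next
    case False then have "k \<le> m" by simp
    from gen[OF this] show ?thesis by (simp add: abs_minus_commute)
  qed
qed

lemma sqrt_quad_bound:
  assumes "m \<ge> (1::nat)"
  shows "2 * \<bar>sqrt (real k) - sqrt (real m)\<bar> \<le> 1 + (real k - real m)^2 / real m"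
proof -
  have sm: "sqrt (real m) > 0" using assms by simp
  have "\<bar>sqrt (real k) - sqrt (real m)\<bar> * (sqrt (real k) + sqrt (real m)) = \<bar>real k - real m\<bar>"
  proof -
    have "(sqrt (real k) - sqrt (real m)) * (sqrt (real k) + sqrt (real m)) = real k - real m"
      by (simp add: algebra_simps)
    moreover have "sqrt (real k) + sqrt (real m) \<ge> 0" by simp
    ultimately show ?thesis by (metis abs_mult abs_of_nonneg)
  qed
  moreover have "\<bar>sqrt (real k) - sqrt (real m)\<bar> * sqrt (real m) \<le> \<bar>sqrt (real k) - sqrt (real m)\<bar> * (sqrt (real k) + sqrt (real m))"
    by (rule mult_left_mono) auto
  ultimately have "\<bar>sqrt (real k) - sqrt (real m)\<bar> * sqrt (real m) \<le> \<bar>real k - real m\<bar>" by linarith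
  hence e: "\<bar>sqrt (real k) - sqrt (real m)\<bar> \<le> \<bar>real k - real m\<bar> / sqrt (real m)"
    using sm by (simp add: divide_simps)
  define x where "x = \<bar>real k - real m\<bar> / sqrt (real m)"
  have x2: "x^2 = (real k - real m)^2 / real m"
    unfolding x_def using assms by (simp add: power_divide)
  have q: "2 * x \<le> 1 + x^2" using sum_squares_ge_zero[of "x - 1" 0]
    by (simp add: power2_eq_square algebra_simps)
  have "\<bar>sqrt (real k) - sqrt (real m)\<bar> \<le> x" using e x_def by simp
  hence "2 * \<bar>sqrt (real k) - sqrt (real m)\<bar> \<le> 2 * x" by simp
  hence "2 * \<bar>sqrt (real k) - sqrt (real m)\<bar> \<le> 1 + x^2" using q by (rule order.trans)
  then show ?thesis unfolding x2 .
qed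



lemma alg: "(q::real) \<noteq> 0 \<Longrightarrow> (n*(n-1) + n*q)*W/q^2 - 2*m*(n*W/q) + m^2*W = ((n/q - m)^2 + n/q*(q-1)/q)*W"
  by (simp add: field_simps power2_eq_square)

lemma tauber_bound:
  fixes a :: "nat \<Rightarrow> real"
  assumes p: "p > 0" and C: "C \<ge> 0"
    and d: "\<And>k. k \<ge> 1 \<Longrightarrow> \<bar>a k - a (k-1)\<bar> \<le> C / sqrt (real k)"
    and E: "\<And>n. \<bar>\<Sum>k\<le>n. (1 / (p + 1) ^ n * (real (n choose k) * p ^ (n - k))) * a k\<bar> \<le> B"
  shows "\<bar>a m\<bar> \<le> B + 3 * C"
proof (cases "m = 0")
  case True
  then show ?thesis using E[of 0] C by simp
next
  case False
  hence m1: "m \<ge> 1" by simp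
  define n where "n = nat \<lfloor>real m * (p + 1)\<rfloor>"
  define W where "W = (p + 1) ^ n"
  define c where "c = (\<lambda>k. real (n choose k) * p ^ (n - k))"
  define w where "w = (\<lambda>k. 1 / (p + 1) ^ n * (real (n choose k) * p ^ (n - k)))"
  have Wp: "W > 0" unfolding W_def using p by simp
  have w_c: "w k = c k / W" for k unfolding w_def c_def W_def by simp
  have c0: "c k \<ge> 0" for k unfolding c_def using p by simp
  have s0: "(\<Sum>k\<le>n. c k) = W" unfolding c_def W_def by (rule mom0)
  have s1: "(p + 1) * (\<Sum>k\<le>n. real k * c k) = real n * W" unfolding c_def W_def by (rule mom1)
  have s2: "(p + 1)^2 * (\<Sum>k\<le>n. (real k)^2 * c k) = (real n * (real n - 1) + real n * (p + 1)) * W"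
    unfolding c_def W_def by (rule mom2)
  have sw: "(\<Sum>k\<le>n. w k) = 1" using s0 Wp by (simp add: w_c sum_divide_distrib[symmetric])
  define x where "x = real n / (p + 1)"
  have fl: "real n \<le> real m * (p + 1)" "real m * (p + 1) < real n + 1"
  proof -
    have y0: "real m * (p + 1) \<ge> 0" using p by simp
    have "real n = real_of_int \<lfloor>real m * (p + 1)\<rfloor>" unfolding n_def using y0 by simp
    then show "real n \<le> real m * (p + 1)" by (simp add: of_int_floor_le)
    show "real m * (p + 1) < real n + 1" using \<open>real n = _\<close> by linarith
  qed
  have x_le: "x \<le> real m" unfolding x_def using fl p by (simp add: divide_simps)
  have x_ge: "x \<ge> real m - 1"
  proof -
    have "(real m - 1)*(p+1) = real m*(p+1) - (p+1)" by (simp add: algebra_simps)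
    hence "(real m - 1)*(p+1) \<le> real n" using fl p by linarith
    thus ?thesis unfolding x_def using p by (simp add: divide_simps)
  qed
  have x0: "x \<ge> 0" unfolding x_def using p by simp
  have mom: "(\<Sum>k\<le>n. c k * (real k - real m)^2) = ((x - real m)^2 + x * p / (p + 1)) * W"
  proof -
    have e1: "(\<Sum>k\<le>n. c k * (real k - real m)^2)
        = (\<Sum>k\<le>n. (real k)^2 * c k) - 2 * real m * (\<Sum>k\<le>n. real k * c k) + (real m)^2 * (\<Sum>k\<le>n. c k)"
      by (simp add: power2_diff algebra_simps sum.distrib sum_subtractf sum_distrib_left sum_distrib_right)
    have e2: "(\<Sum>k\<le>n. (real k)^2 * c k) = (real n * (real n - 1) + real n * (p + 1)) * W / (p+1)^2"
      using s2 p by (simp add: field_simps)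
    have e3: "(\<Sum>k\<le>n. real k * c k) = real n * W / (p + 1)"
      using s1 p by (simp add: field_simps)
    have "p + 1 \<noteq> 0" using p by auto
    from alg[OF this, where n="real n" and m="real m" and W=W]
    show ?thesis unfolding e1 e2 e3 s0 x_def by simp
  qed
  have mom_le: "(\<Sum>k\<le>n. w k * (real k - real m)^2) \<le> 2 * real m"
  proof -
    have "(\<Sum>k\<le>n. w k * (real k - real m)^2) = (x - real m)^2 + x * p / (p + 1)"
      using mom Wp by (simp add: w_c sum_divide_distrib[symmetric])
    also have "(x - real m)^2 \<le> 1"
    proof -
      have "(x - real m)^2 = (real m - x) * (real m - x)" by (simp add: power2_eq_square algebra_simps)
      also have "\<dots> \<le> 1" by (rule mult_le_one) (use x_le x_ge in auto)
      finally show ?thesis .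
    qed
    also have "x * p / (p + 1) \<le> x" using p x0 by (simp add: divide_simps mult_left_mono)
    finally show ?thesis using x_le m1 by simp
  qed
  have dk: "\<bar>a k - a m\<bar> \<le> C * (1 + (real k - real m)^2 / real m)" for k
  proof -
    have "\<bar>a k - a m\<bar> \<le> 2 * C * \<bar>sqrt (real k) - sqrt (real m)\<bar>"
      by (rule diff_sqrt_bound[OF C d])
    also have "\<dots> = C * (2 * \<bar>sqrt (real k) - sqrt (real m)\<bar>)" by simp
    also have "\<dots> \<le> C * (1 + (real k - real m)^2 / real m)"
      by (rule mult_left_mono[OF sqrt_quad_bound[OF m1] C])
    finally show ?thesis .
  qed
  have w0: "w k \<ge> 0" for k using c0 Wp by (simp add: w_c)
  have eqA: "a m - (\<Sum>k\<le>n. w k * a k) = (\<Sum>k\<le>n. w k * (a m - a k))"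
    using sw by (simp add: algebra_simps sum_subtractf sum_distrib_left[symmetric])
  have "\<bar>a m - (\<Sum>k\<le>n. w k * a k)\<bar> \<le> (\<Sum>k\<le>n. w k * \<bar>a m - a k\<bar>)"
    unfolding eqA by (rule order.trans[OF sum_abs]) (simp add: abs_mult w0)
  also have "\<dots> \<le> (\<Sum>k\<le>n. w k * (C * (1 + (real k - real m)^2 / real m)))"
    by (rule sum_mono, rule mult_left_mono[OF _ w0]) (use dk in \<open>simp add: abs_minus_commute\<close>)
  also have "\<dots> = C * ((\<Sum>k\<le>n. w k) + (\<Sum>k\<le>n. w k * (real k - real m)^2) / real m)"
    by (simp add: algebra_simps sum.distrib sum_distrib_left sum_divide_distrib)
  also have "\<dots> \<le> C * (1 + 2 * real m / real m)"
    using mom_le m1 C sw by (intro mult_left_mono) (simp_all add: divide_right_mono pos_divide_le_eq)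
  also have "\<dots> = 3 * C" using m1 by simp
  finally have "\<bar>a m - (\<Sum>k\<le>n. w k * a k)\<bar> \<le> 3 * C" .
  moreover have "\<bar>\<Sum>k\<le>n. w k * a k\<bar> \<le> B" using E[of n] unfolding w_def .
  ultimately show ?thesis by linarith
qed



definition okK :: "fuzzy \<Rightarrow> real \<Rightarrow> bool" where
  "okK w K \<longleftrightarrow> (\<forall>\<alpha>. 0 < \<alpha> \<and> \<alpha> \<le> 1 \<longrightarrow> levelset w \<alpha> \<noteq> {} \<and> levelset w \<alpha> \<subseteq> {-K..K})"

lemma okK_mem:
  assumes "okK w K" "0 < \<alpha>" "\<alpha> \<le> 1" "t \<in> levelset w \<alpha>"
  shows "lo w \<alpha> \<le> t \<and> t \<le> hi w \<alpha>"
proof -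
  have sub: "levelset w \<alpha> \<subseteq> {-K..K}" using assms unfolding okK_def by blast
  have "bdd_below (levelset w \<alpha>)" "bdd_above (levelset w \<alpha>)"
    using sub by (auto intro: bdd_below_mono bdd_above_mono)
  then show ?thesis unfolding lo_def hi_def using assms(4) by (auto intro: cInf_lower cSup_upper)
qed

lemma okK_lohi:
  assumes "okK w K" "0 < \<alpha>" "\<alpha> \<le> 1"
  shows "-K \<le> lo w \<alpha> \<and> lo w \<alpha> \<le> hi w \<alpha> \<and> hi w \<alpha> \<le> K"
proof -
  have ne: "levelset w \<alpha> \<noteq> {}" and sub: "levelset w \<alpha> \<subseteq> {-K..K}"
    using assms unfolding okK_def by blast+
  obtain t where t: "t \<in> levelset w \<alpha>" using ne by blast
  have m: "lo w \<alpha> \<le> t \<and> t \<le> hi w \<alpha>" by (rule okK_mem[OF assms t])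
  have "-K \<le> lo w \<alpha>" unfolding lo_def using ne sub by (auto intro!: cInf_greatest)
  moreover have "hi w \<alpha> \<le> K" unfolding hi_def using ne sub by (auto intro!: cSup_least)
  ultimately show ?thesis using m by linarith
qed

lemma fl_level:
  assumes LH0: "\<forall>\<beta>. 0 < \<beta> \<and> \<beta> \<le> 1 \<longrightarrow> -K \<le> L \<beta> \<and> L \<beta> \<le> H \<beta> \<and> H \<beta> \<le> K"
  shows "okK (from_levels L H) K"
    and "\<And>\<alpha>. 0 < \<alpha> \<Longrightarrow> \<alpha> \<le> 1 \<Longrightarrow> L \<alpha> \<in> levelset (from_levels L H) \<alpha> \<and> H \<alpha> \<in> levelset (from_levels L H) \<alpha>"
proof -
  have LH: "-K \<le> L \<beta> \<and> L \<beta> \<le> H \<beta> \<and> H \<beta> \<le> K" if "0 < \<beta>" "\<beta> \<le> 1" for \<beta> using LH0 that by blast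
  define A where "A t = {\<alpha>. 0 < \<alpha> \<and> \<alpha> \<le> 1 \<and> L \<alpha> \<le> t \<and> t \<le> H \<alpha>}" for t
  have fl: "from_levels L H t = Sup ({0} \<union> A t)" for t unfolding from_levels_def A_def by simp
  have bdd: "bdd_above ({0} \<union> A t)" for t unfolding A_def by (rule bdd_aboveI[of _ 1]) auto
  have lev: "levelset (from_levels L H) \<alpha> = {t. \<alpha> \<le> Sup ({0} \<union> A t)}" if "0 < \<alpha>" for \<alpha>
    unfolding levelset_def fl using that by simp
  have inlev: "t \<in> levelset (from_levels L H) \<alpha>" if "0 < \<alpha>" "\<alpha> \<le> 1" "L \<alpha> \<le> t" "t \<le> H \<alpha>" for \<alpha> t
  proof -
    have "\<alpha> \<in> {0} \<union> A t" unfolding A_def using that by auto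
    hence "\<alpha> \<le> Sup ({0} \<union> A t)" by (rule cSup_upper[OF _ bdd])
    thus ?thesis using lev that by auto
  qed
  show "L \<alpha> \<in> levelset (from_levels L H) \<alpha> \<and> H \<alpha> \<in> levelset (from_levels L H) \<alpha>"
    if "0 < \<alpha>" "\<alpha> \<le> 1" for \<alpha>
    using inlev[OF that] LH[OF that] by auto
  show "okK (from_levels L H) K"
    unfolding okK_def
  proof (intro allI impI conjI)
    fix \<alpha> :: real assume a: "0 < \<alpha> \<and> \<alpha> \<le> 1"
    show "levelset (from_levels L H) \<alpha> \<noteq> {}" using inlev[of \<alpha> "L \<alpha>"] a LH[of \<alpha>] by auto
    show "levelset (from_levels L H) \<alpha> \<subseteq> {-K..K}"
    proof
      fix t assume "t \<in> levelset (from_levels L H) \<alpha>"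
      hence t: "\<alpha> \<le> Sup ({0} \<union> A t)" using lev a by auto
      have "A t \<noteq> {}"
      proof
        assume "A t = {}" then show False using t a by simp
      qed
      then obtain \<beta> where "\<beta> \<in> A t" by blast
      then show "t \<in> {-K..K}" unfolding A_def using LH by force
    qed
  qed
qed

lemma fl_lohi:
  assumes LH0: "\<forall>\<beta>. 0 < \<beta> \<and> \<beta> \<le> 1 \<longrightarrow> -K \<le> L \<beta> \<and> L \<beta> \<le> H \<beta> \<and> H \<beta> \<le> K"
    and "0 < \<alpha>" "\<alpha> \<le> 1"
  shows "lo (from_levels L H) \<alpha> \<le> L \<alpha> \<and> H \<alpha> \<le> hi (from_levels L H) \<alpha>"
  using okK_mem[OF fl_level(1)[OF LH0] assms(2,3)] fl_level(2)[OF LH0 assms(2,3)] by blast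

lemma fadd_ok:
  assumes "okK u K1" "okK v K2"
  shows "okK (fadd u v) (K1 + K2)"
    and "\<And>\<alpha>. 0 < \<alpha> \<Longrightarrow> \<alpha> \<le> 1 \<Longrightarrow> lo (fadd u v) \<alpha> \<le> lo u \<alpha> + lo v \<alpha> \<and> hi u \<alpha> + hi v \<alpha> \<le> hi (fadd u v) \<alpha>"
proof -
  have LH: "-(K1+K2) \<le> lo u \<beta> + lo v \<beta> \<and> lo u \<beta> + lo v \<beta> \<le> hi u \<beta> + hi v \<beta> \<and> hi u \<beta> + hi v \<beta> \<le> K1 + K2"
    if "0 < \<beta>" "\<beta> \<le> 1" for \<beta>
    using okK_lohi[OF assms(1) that] okK_lohi[OF assms(2) that] by linarith
  show "okK (fadd u v) (K1 + K2)" unfolding fadd_def by (rule fl_level(1)) (use LH in blast)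
  show "lo (fadd u v) \<alpha> \<le> lo u \<alpha> + lo v \<alpha> \<and> hi u \<alpha> + hi v \<alpha> \<le> hi (fadd u v) \<alpha>"
    if "0 < \<alpha>" "\<alpha> \<le> 1" for \<alpha>
    unfolding fadd_def by (rule fl_lohi[OF _ that]) (use LH in blast)
qed

lemma fscale_ok:
  assumes "okK u K" "k \<ge> 0"
  shows "okK (fscale k u) (k * K)"
    and "\<And>\<alpha>. 0 < \<alpha> \<Longrightarrow> \<alpha> \<le> 1 \<Longrightarrow> lo (fscale k u) \<alpha> \<le> k * lo u \<alpha> \<and> k * hi u \<alpha> \<le> hi (fscale k u) \<alpha>"
proof -
  have mm: "min (k * lo u \<beta>) (k * hi u \<beta>) = k * lo u \<beta> \<and> max (k * lo u \<beta>) (k * hi u \<beta>) = k * hi u \<beta>"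
    if "0 < \<beta>" "\<beta> \<le> 1" for \<beta>
    using okK_lohi[OF assms(1) that] mult_left_mono[OF _ assms(2), of "lo u \<beta>" "hi u \<beta>"] by auto
  have LH: "-(k*K) \<le> min (k * lo u \<beta>) (k * hi u \<beta>) \<and> min (k * lo u \<beta>) (k * hi u \<beta>) \<le> max (k * lo u \<beta>) (k * hi u \<beta>) \<and> max (k * lo u \<beta>) (k * hi u \<beta>) \<le> k * K"
    if "0 < \<beta>" "\<beta> \<le> 1" for \<beta>
  proof -
    have b: "-K \<le> lo u \<beta>" "hi u \<beta> \<le> K" "lo u \<beta> \<le> hi u \<beta>" using okK_lohi[OF assms(1) that] by auto
    have "k * (-K) \<le> k * lo u \<beta>" by (rule mult_left_mono[OF b(1) assms(2)])
    moreover have "k * hi u \<beta> \<le> k * K" by (rule mult_left_mono[OF b(2) assms(2)])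
    moreover have "k * lo u \<beta> \<le> k * hi u \<beta>" by (rule mult_left_mono[OF b(3) assms(2)])
    ultimately show ?thesis using mm[OF that] by simp
  qed
  show "okK (fscale k u) (k * K)" unfolding fscale_def by (rule fl_level(1)) (use LH in blast)
  show "lo (fscale k u) \<alpha> \<le> k * lo u \<alpha> \<and> k * hi u \<alpha> \<le> hi (fscale k u) \<alpha>"
    if "0 < \<alpha>" "\<alpha> \<le> 1" for \<alpha>
  proof -
    have LH0: "\<forall>\<beta>. 0 < \<beta> \<and> \<beta> \<le> 1 \<longrightarrow> -(k*K) \<le> min (k * lo u \<beta>) (k * hi u \<beta>) \<and> min (k * lo u \<beta>) (k * hi u \<beta>) \<le> max (k * lo u \<beta>) (k * hi u \<beta>) \<and> max (k * lo u \<beta>) (k * hi u \<beta>) \<le> k * K"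
      using LH by blast
    show ?thesis using fl_lohi[OF LH0 that] mm[OF that] unfolding fscale_def by simp
  qed
qed

lemma fsum_ok:
  assumes "\<And>k. k \<le> n \<Longrightarrow> okK (f k) (Kf k)"
  shows "okK (fsum_upto f n) (\<Sum>k\<le>n. Kf k) \<and>
    (\<forall>\<alpha>. 0 < \<alpha> \<and> \<alpha> \<le> 1 \<longrightarrow> lo (fsum_upto f n) \<alpha> \<le> (\<Sum>k\<le>n. lo (f k) \<alpha>) \<and> (\<Sum>k\<le>n. hi (f k) \<alpha>) \<le> hi (fsum_upto f n) \<alpha>)"
  using assms
proof (induction n)
  case 0
  then show ?case by simp
next
  case (Suc n)
  have IH: "okK (fsum_upto f n) (\<Sum>k\<le>n. Kf k) \<and>
    (\<forall>\<alpha>. 0 < \<alpha> \<and> \<alpha> \<le> 1 \<longrightarrow> lo (fsum_upto f n) \<alpha> \<le> (\<Sum>k\<le>n. lo (f k) \<alpha>) \<and> (\<Sum>k\<le>n. hi (f k) \<alpha>) \<le> hi (fsum_upto f n) \<alpha>)"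
    using Suc by simp
  have fS: "okK (f (Suc n)) (Kf (Suc n))" using Suc.prems by simp
  show ?case
  proof (intro conjI allI impI)
    show "okK (fsum_upto f (Suc n)) (\<Sum>k\<le>Suc n. Kf k)"
      using fadd_ok(1)[OF conjunct1[OF IH] fS] by simp
    fix \<alpha> :: real assume a: "0 < \<alpha> \<and> \<alpha> \<le> 1"
    have h1: "lo (fsum_upto f (Suc n)) \<alpha> \<le> lo (fsum_upto f n) \<alpha> + lo (f (Suc n)) \<alpha>"
      and h2: "hi (fsum_upto f n) \<alpha> + hi (f (Suc n)) \<alpha> \<le> hi (fsum_upto f (Suc n)) \<alpha>"
      using fadd_ok(2)[OF conjunct1[OF IH] fS, of \<alpha>] a by simp_all
    show "lo (fsum_upto f (Suc n)) \<alpha> \<le> (\<Sum>k\<le>Suc n. lo (f k) \<alpha>)"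
      using h1 IH a by force
    show "(\<Sum>k\<le>Suc n. hi (f k) \<alpha>) \<le> hi (fsum_upto f (Suc n)) \<alpha>"
      using h2 IH a by force
  qed
qed





lemma euler_ok:
  assumes p: "p > 0" and U: "\<And>k. okK (u k) (Ku k)"
  shows "\<exists>K. okK (euler_mean p u n) K \<and>
    (\<forall>\<alpha>. 0 < \<alpha> \<and> \<alpha> \<le> 1 \<longrightarrow>
       lo (euler_mean p u n) \<alpha> \<le> (\<Sum>k\<le>n. (1 / (p + 1) ^ n * (real (n choose k) * p ^ (n - k))) * lo (u k) \<alpha>) \<and>
       (\<Sum>k\<le>n. (1 / (p + 1) ^ n * (real (n choose k) * p ^ (n - k))) * hi (u k) \<alpha>) \<le> hi (euler_mean p u n) \<alpha>)"
proof -
  define c where "c k = real (n choose k) * p ^ (n - k)" for k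
  define s where "s = 1 / (p + 1) ^ n"
  define f where "f k = fscale (c k) (u k)" for k
  have c0: "c k \<ge> 0" for k unfolding c_def using p by simp
  have s0: "s \<ge> 0" unfolding s_def using p by simp
  have fok: "okK (f k) (c k * Ku k)" for k unfolding f_def by (rule fscale_ok(1)[OF U c0])
  have fs: "okK (fsum_upto f n) (\<Sum>k\<le>n. c k * Ku k) \<and>
    (\<forall>\<alpha>. 0 < \<alpha> \<and> \<alpha> \<le> 1 \<longrightarrow> lo (fsum_upto f n) \<alpha> \<le> (\<Sum>k\<le>n. lo (f k) \<alpha>) \<and> (\<Sum>k\<le>n. hi (f k) \<alpha>) \<le> hi (fsum_upto f n) \<alpha>)"
    by (rule fsum_ok) (rule fok)
  have em: "euler_mean p u n = fscale s (fsum_upto f n)"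
    unfolding euler_mean_def s_def f_def c_def by simp
  show ?thesis
  proof (intro exI conjI allI impI)
    show "okK (euler_mean p u n) (s * (\<Sum>k\<le>n. c k * Ku k))"
      unfolding em by (rule fscale_ok(1)[OF conjunct1[OF fs] s0])
    fix \<alpha> :: real assume a: "0 < \<alpha> \<and> \<alpha> \<le> 1"
    have e1: "lo (euler_mean p u n) \<alpha> \<le> s * lo (fsum_upto f n) \<alpha>"
      and e2: "s * hi (fsum_upto f n) \<alpha> \<le> hi (euler_mean p u n) \<alpha>"
      unfolding em using fscale_ok(2)[OF conjunct1[OF fs] s0, of \<alpha>] a by auto
    have l1: "lo (fsum_upto f n) \<alpha> \<le> (\<Sum>k\<le>n. c k * lo (u k) \<alpha>)"
    proof -
      have "lo (fsum_upto f n) \<alpha> \<le> (\<Sum>k\<le>n. lo (f k) \<alpha>)" using fs a by blast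
      also have "\<dots> \<le> (\<Sum>k\<le>n. c k * lo (u k) \<alpha>)"
        by (rule sum_mono) (use fscale_ok(2)[OF U c0] a in \<open>auto simp: f_def\<close>)
      finally show ?thesis .
    qed
    have h1: "(\<Sum>k\<le>n. c k * hi (u k) \<alpha>) \<le> hi (fsum_upto f n) \<alpha>"
    proof -
      have "(\<Sum>k\<le>n. c k * hi (u k) \<alpha>) \<le> (\<Sum>k\<le>n. hi (f k) \<alpha>)"
        by (rule sum_mono) (use fscale_ok(2)[OF U c0] a in \<open>auto simp: f_def\<close>)
      also have "\<dots> \<le> hi (fsum_upto f n) \<alpha>" using fs a by blast
      finally show ?thesis .
    qed
    have "lo (euler_mean p u n) \<alpha> \<le> s * (\<Sum>k\<le>n. c k * lo (u k) \<alpha>)"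
      using e1 mult_left_mono[OF l1 s0] by linarith
    then show "lo (euler_mean p u n) \<alpha> \<le> (\<Sum>k\<le>n. (1 / (p + 1) ^ n * (real (n choose k) * p ^ (n - k))) * lo (u k) \<alpha>)"
      by (simp add: sum_distrib_left s_def c_def mult.assoc)
    have "s * (\<Sum>k\<le>n. c k * hi (u k) \<alpha>) \<le> hi (euler_mean p u n) \<alpha>"
      using e2 mult_left_mono[OF h1 s0] by linarith
    then show "(\<Sum>k\<le>n. (1 / (p + 1) ^ n * (real (n choose k) * p ^ (n - k))) * hi (u k) \<alpha>) \<le> hi (euler_mean p u n) \<alpha>"
      by (simp add: sum_distrib_left s_def c_def mult.assoc)
  qed
qed




lemma fuzzy_ok:
  assumes "fuzzy_number u"
  shows "\<exists>K. okK u K"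
proof -
  have cpt: "compact (closure {t. u t > 0})" and one: "\<exists>t. u t = 1"
    using assms unfolding fuzzy_number_def by blast+
  have "bounded (closure {t. u t > 0})" by (rule compact_imp_bounded[OF cpt])
  then obtain K where K: "\<forall>x\<in>closure {t. u t > 0}. norm x \<le> K"
    unfolding bounded_iff by blast
  have "okK u K" unfolding okK_def
  proof (intro allI impI conjI)
    fix \<alpha> :: real assume a: "0 < \<alpha> \<and> \<alpha> \<le> 1"
    have lev: "levelset u \<alpha> = {t. \<alpha> \<le> u t}" unfolding levelset_def using a by simp
    obtain t0 where "u t0 = 1" using one by blast
    hence "t0 \<in> levelset u \<alpha>" unfolding lev using a by simp
    thus "levelset u \<alpha> \<noteq> {}" by (metis empty_iff)
    show "levelset u \<alpha> \<subseteq> {-K..K}"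
    proof
      fix t assume "t \<in> levelset u \<alpha>"
      hence "t \<in> {t. u t > 0}" unfolding lev using a by auto
      hence "t \<in> closure {t. u t > 0}" by (rule subsetD[OF closure_subset])
      hence "norm t \<le> K" using K by blast
      thus "t \<in> {-K..K}" by (simp add: abs_le_iff)
    qed
  qed
  thus ?thesis by blast
qed




lemma fdist_le:
  assumes "okK u K1" "okK v K2" "0 \<le> \<alpha>" "\<alpha> \<le> 1"
  shows "\<bar>lo u \<alpha> - lo v \<alpha>\<bar> \<le> fdist u v \<and> \<bar>hi u \<alpha> - hi v \<alpha>\<bar> \<le> fdist u v"
proof -
  define g where "g \<alpha> = max \<bar>lo u \<alpha> - lo v \<alpha>\<bar> \<bar>hi u \<alpha> - hi v \<alpha>\<bar>" for \<alpha>
  have gb: "g \<beta> \<le> max (g 0) (K1 + K2)" if "\<beta> \<in> {0..1}" for \<beta>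
  proof (cases "\<beta> = 0")
    case True then show ?thesis by simp
  next
    case False
    hence b: "0 < \<beta>" "\<beta> \<le> 1" using that by auto
    have x: "-K1 \<le> lo u \<beta>" "lo u \<beta> \<le> hi u \<beta>" "hi u \<beta> \<le> K1" using okK_lohi[OF assms(1) b] by auto
    have y: "-K2 \<le> lo v \<beta>" "lo v \<beta> \<le> hi v \<beta>" "hi v \<beta> \<le> K2" using okK_lohi[OF assms(2) b] by auto
    have "\<bar>lo u \<beta> - lo v \<beta>\<bar> \<le> K1 + K2" unfolding abs_le_iff using x y by linarith
    moreover have "\<bar>hi u \<beta> - hi v \<beta>\<bar> \<le> K1 + K2" unfolding abs_le_iff using x y by linarith
    ultimately have "g \<beta> \<le> K1 + K2" unfolding g_def by (rule max.boundedI)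
    thus ?thesis by (rule order.trans[OF _ max.cobounded2])
  qed
  have "bdd_above (g ` {0..1})" using gb by (intro bdd_aboveI2[of _ _ "max (g 0) (K1 + K2)"]) 
  hence "g \<alpha> \<le> (SUP \<alpha>\<in>{0..1}. g \<alpha>)" using assms(3,4) by (intro cSUP_upper) auto
  hence "max \<bar>lo u \<alpha> - lo v \<alpha>\<bar> \<bar>hi u \<alpha> - hi v \<alpha>\<bar> \<le> fdist u v" unfolding fdist_def g_def .
  thus ?thesis by simp
qed




lemma fzero_lohi:
  assumes "0 \<le> \<alpha>" "\<alpha> \<le> 1"
  shows "lo fzero \<alpha> = 0 \<and> hi fzero \<alpha> = 0"
proof -
  have "levelset fzero \<alpha> = {0}"
  proof (cases "\<alpha> = 0")
    case True
    have "{t. fzero t > 0} = {0}" unfolding fzero_def by auto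
    then show ?thesis using True unfolding levelset_def by simp
  next
    case False
    then show ?thesis using assms unfolding levelset_def fzero_def by auto
  qed
  then show ?thesis unfolding lo_def hi_def by simp
qed





lemma fdist_zero_bound:
  assumes fu: "fuzzy_number u" and ok: "okK u K"
    and R: "\<And>\<alpha>. 0 < \<alpha> \<Longrightarrow> \<alpha> \<le> 1 \<Longrightarrow> \<bar>lo u \<alpha>\<bar> \<le> R \<and> \<bar>hi u \<alpha>\<bar> \<le> R"
  shows "fdist u fzero \<le> R"
proof -
  define S where "S = {t. u t > 0}"
  obtain t1 where t1: "u t1 = 1" using fu unfolding fuzzy_number_def by blast
  have SR: "S \<subseteq> {-R..R}"
  proof
    fix t assume "t \<in> S"
    hence ut: "u t > 0" unfolding S_def by simp
    define \<beta> where "\<beta> = min (u t) 1"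
    have b: "0 < \<beta>" "\<beta> \<le> 1" unfolding \<beta>_def using ut by auto
    have "\<beta> \<le> u t" unfolding \<beta>_def by simp
    hence "t \<in> levelset u \<beta>" unfolding levelset_def using b by simp
    from okK_mem[OF ok b this] R[OF b] show "t \<in> {-R..R}" by auto
  qed
  have cR: "closure S \<subseteq> {-R..R}" by (rule closure_minimal[OF SR]) simp
  have "t1 \<in> S" unfolding S_def using t1 by simp
  hence x: "t1 \<in> closure S" using closure_subset by blast
  hence cne: "closure S \<noteq> {}" by (metis empty_iff)
  have bb: "bdd_below (closure S)" "bdd_above (closure S)"
    by (rule bdd_belowI[of _ "-R"], use cR in force) (rule bdd_aboveI[of _ "R"], use cR in force)
  define x where "x = t1"
  note x = x[folded x_def]
  have l0: "lo u 0 = Inf (closure S)" "hi u 0 = Sup (closure S)"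
    unfolding lo_def hi_def levelset_def S_def by simp_all
  have "-R \<le> Inf (closure S)" by (rule cInf_greatest[OF cne]) (use cR in force)
  moreover have "Inf (closure S) \<le> x" by (rule cInf_lower[OF x bb(1)])
  moreover have "x \<le> Sup (closure S)" by (rule cSup_upper[OF x bb(2)])
  moreover have "Sup (closure S) \<le> R" by (rule cSup_least[OF cne]) (use cR in force)
  moreover have "x \<in> {-R..R}" using x cR by (rule subsetD[rotated])
  ultimately have z: "\<bar>lo u 0\<bar> \<le> R \<and> \<bar>hi u 0\<bar> \<le> R" unfolding l0 abs_le_iff atLeastAtMost_iff by linarith
  show ?thesis unfolding fdist_def
  proof (rule cSUP_least)
    show "{0..1::real} \<noteq> {}" by simp
    fix \<alpha> :: real assume a: "\<alpha> \<in> {0..1}"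
    have fz: "lo fzero \<alpha> = 0" "hi fzero \<alpha> = 0" using fzero_lohi[of \<alpha>] a by simp_all
    show "max \<bar>lo u \<alpha> - lo fzero \<alpha>\<bar> \<bar>hi u \<alpha> - hi fzero \<alpha>\<bar> \<le> R"
    proof (cases "\<alpha> = 0")
      case True then show ?thesis using z fz by simp
    next
      case False
      hence "0 < \<alpha>" "\<alpha> \<le> 1" using a by auto
      then have "\<bar>lo u \<alpha>\<bar> \<le> R \<and> \<bar>hi u \<alpha>\<bar> \<le> R" by (rule R)
      then show ?thesis using fz by simp
    qed
  qed
qed


theorem mainTheorem3:
  fixes p :: real and u :: "nat \<Rightarrow> fuzzy" and \<mu> :: fuzzy
  assumes "p > 0"
    and "\<And>n. fuzzy_number (u n)"
    and "fuzzy_number \<mu>"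
    and "Ep_summable_to p u \<mu>"
    and "(\<lambda>n. sqrt (real n) * fdist (u (n - 1)) (u n)) \<in> O(\<lambda>_. 1)"
  shows "\<exists>M > 0. \<forall>n. fdist (u n) fzero < M"
proof -
  have "\<forall>k. \<exists>K. okK (u k) K" using fuzzy_ok assms(2) by blast
  then obtain Ku where U: "\<And>k. okK (u k) (Ku k)" by metis
  obtain Km where Mu: "okK \<mu> Km" using fuzzy_ok[OF assms(3)] by blast
  define t where "t n = euler_mean p u n" for n
  define w where "w n k = 1 / (p + 1) ^ n * (real (n choose k) * p ^ (n - k))" for n k
  have w0: "w n k \<ge> 0" for n k unfolding w_def using assms(1) by simp
  have "\<forall>n. \<exists>K. okK (t n) K \<and> (\<forall>\<alpha>. 0 < \<alpha> \<and> \<alpha> \<le> 1 \<longrightarrow>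
       lo (t n) \<alpha> \<le> (\<Sum>k\<le>n. w n k * lo (u k) \<alpha>) \<and> (\<Sum>k\<le>n. w n k * hi (u k) \<alpha>) \<le> hi (t n) \<alpha>)"
  proof
    fix n show "\<exists>K. okK (t n) K \<and> (\<forall>\<alpha>. 0 < \<alpha> \<and> \<alpha> \<le> 1 \<longrightarrow>
       lo (t n) \<alpha> \<le> (\<Sum>k\<le>n. w n k * lo (u k) \<alpha>) \<and> (\<Sum>k\<le>n. w n k * hi (u k) \<alpha>) \<le> hi (t n) \<alpha>)"
      using euler_ok[where u=u and Ku=Ku and n=n, OF assms(1) U] unfolding t_def w_def .
  qed
  then obtain Kt where TT: "\<And>n. okK (t n) (Kt n) \<and> (\<forall>\<alpha>. 0 < \<alpha> \<and> \<alpha> \<le> 1 \<longrightarrow>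
       lo (t n) \<alpha> \<le> (\<Sum>k\<le>n. w n k * lo (u k) \<alpha>) \<and> (\<Sum>k\<le>n. w n k * hi (u k) \<alpha>) \<le> hi (t n) \<alpha>)"
    by metis
  have conv: "(\<lambda>n. fdist (t n) \<mu>) \<longlonglongrightarrow> 0" using assms(4) unfolding Ep_summable_to_def t_def .
  obtain Dm where Dm: "\<And>n. norm (fdist (t n) \<mu>) \<le> Dm"
  proof -
    have "Bseq (\<lambda>n. fdist (t n) \<mu>)" using conv by (intro convergent_imp_Bseq) (auto simp: convergent_def)
    then obtain K where "\<forall>n. norm (fdist (t n) \<mu>) \<le> K" by (rule BseqE) blast
    then show ?thesis using that by blast
  qed
  obtain c where c: "c > 0" and ev: "eventually (\<lambda>n. norm (sqrt (real n) * fdist (u (n - 1)) (u n)) \<le> c * norm (1::real)) at_top"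
    using assms(5) by (elim landau_o.bigE)
  then obtain N where N: "\<And>n. n \<ge> N \<Longrightarrow> norm (sqrt (real n) * fdist (u (n - 1)) (u n)) \<le> c"
    unfolding eventually_sequentially by auto
  define C where "C = c + (\<Sum>n<N. \<bar>sqrt (real n) * fdist (u (n - 1)) (u n)\<bar>)"
  have sum0: "(\<Sum>n<N. \<bar>sqrt (real n) * fdist (u (n - 1)) (u n)\<bar>) \<ge> 0" by (rule sum_nonneg) simp
  have C0: "C \<ge> 0" unfolding C_def using c sum0 by linarith
  have Cb: "sqrt (real n) * fdist (u (n - 1)) (u n) \<le> C" for n
  proof (cases "n \<ge> N")
    case True
    have h: "\<bar>sqrt (real n) * fdist (u (n - 1)) (u n)\<bar> \<le> c" using N[OF True] by simp
    have "sqrt (real n) * fdist (u (n - 1)) (u n) \<le> \<bar>sqrt (real n) * fdist (u (n - 1)) (u n)\<bar>" by (rule abs_ge_self)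
    then show ?thesis using h sum0 unfolding C_def by linarith
  next
    case False
    hence "\<bar>sqrt (real n) * fdist (u (n - 1)) (u n)\<bar> \<le> (\<Sum>n<N. \<bar>sqrt (real n) * fdist (u (n - 1)) (u n)\<bar>)"
      by (intro member_le_sum) auto
    then show ?thesis unfolding C_def using c by linarith
  qed
  define B where "B = Km + Dm"
  have key: "\<bar>lo (u m) \<alpha>\<bar> \<le> B + 3 * C \<and> \<bar>hi (u m) \<alpha>\<bar> \<le> B + 3 * C" if a: "0 < \<alpha>" "\<alpha> \<le> 1" for \<alpha> m
  proof -
    have a0: "0 \<le> \<alpha>" using a by simp
    have dd: "fdist (u (k - 1)) (u k) \<le> C / sqrt (real k)" if "k \<ge> 1" for k
    proof -
      have "sqrt (real k) > 0" using that by simp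
      then show ?thesis using Cb[of k] by (simp add: pos_le_divide_eq mult.commute)
    qed
    have da: "\<bar>lo (u k) \<alpha> - lo (u (k-1)) \<alpha>\<bar> \<le> C / sqrt (real k)" if "k \<ge> 1" for k
      using fdist_le[OF U U a0 a(2), of "k - 1" k] dd[OF that] by (simp add: abs_minus_commute)
    have db: "\<bar>hi (u k) \<alpha> - hi (u (k-1)) \<alpha>\<bar> \<le> C / sqrt (real k)" if "k \<ge> 1" for k
      using fdist_le[OF U U a0 a(2), of "k - 1" k] dd[OF that] by (simp add: abs_minus_commute)
    have bnd: "\<bar>\<Sum>k\<le>n. w n k * lo (u k) \<alpha>\<bar> \<le> B \<and> \<bar>\<Sum>k\<le>n. w n k * hi (u k) \<alpha>\<bar> \<le> B" for n
    proof -
      have ab: "(\<Sum>k\<le>n. w n k * lo (u k) \<alpha>) \<le> (\<Sum>k\<le>n. w n k * hi (u k) \<alpha>)"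
        by (rule sum_mono, rule mult_left_mono[OF _ w0]) (use okK_lohi[OF U a] in auto)
      have t1: "lo (t n) \<alpha> \<le> (\<Sum>k\<le>n. w n k * lo (u k) \<alpha>)" and t2: "(\<Sum>k\<le>n. w n k * hi (u k) \<alpha>) \<le> hi (t n) \<alpha>"
        using TT[of n] a by auto
      have f: "\<bar>lo (t n) \<alpha> - lo \<mu> \<alpha>\<bar> \<le> fdist (t n) \<mu> \<and> \<bar>hi (t n) \<alpha> - hi \<mu> \<alpha>\<bar> \<le> fdist (t n) \<mu>"
        by (rule fdist_le[OF conjunct1[OF TT] Mu a0 a(2)])
      have dm: "fdist (t n) \<mu> \<le> Dm" using Dm[of n] by simp
      have m: "-Km \<le> lo \<mu> \<alpha>" "hi \<mu> \<alpha> \<le> Km" using okK_lohi[OF Mu a] by auto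
      show ?thesis unfolding B_def abs_le_iff using ab t1 t2 f dm m by (simp add: abs_le_iff)
    qed
    have "\<bar>lo (u m) \<alpha>\<bar> \<le> B + 3 * C"
      by (rule tauber_bound[OF assms(1) C0 da]) (use bnd in \<open>simp_all add: w_def\<close>)
    moreover have "\<bar>hi (u m) \<alpha>\<bar> \<le> B + 3 * C"
      by (rule tauber_bound[OF assms(1) C0 db]) (use bnd in \<open>simp_all add: w_def\<close>)
    ultimately show ?thesis by simp
  qed
  have "fdist (u n) fzero \<le> B + 3 * C" for n
    by (rule fdist_zero_bound[OF assms(2) U]) (rule key)
  hence "\<forall>n. fdist (u n) fzero < \<bar>B + 3 * C\<bar> + 1" by (smt (verit))
  moreover have "\<bar>B + 3 * C\<bar> + 1 > 0" by simp
  ultimately show ?thesis by blast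
qed


end
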